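(* Let $k\ge2$ and $\mathcal{R}=\mathbb{C}[\xi_0,\xi_1,\xi_2,\xi_3]$. The sequence $\mathcal{R}^{k+1}\xleftarrow{D_0^{(k)}(\xi)^t}\mathcal{R}^{2k}\xleftarrow{D_1^{(k)}(\xi)^t}\mathcal{R}^{k-1}$ is exact, i.e. $\ker D_0^{(k)}(\xi)^t=\operatorname{Im}D_1^{(k)}(\xi)^t$ in $\mathcal{R}^{2k}$.
   Context: Put $a=\frac1i(\xi_0-i\xi_1)$, $c=\frac1i(\xi_0+i\xi_1)$, $b=\frac1i(\xi_2-i\xi_3)$, $d=\frac1i(\xi_2+i\xi_3)$ (polynomials in $\mathcal{R}$). $D_0^{(k)}(\xi)$ is the $(2k)\times(k+1)$ polynomial matrix whose row $2j$ ($j=0,\dots,k-1$, indices from $0$) has $-d$ in column $j$ and $-c$ in column $j+1$, and whose row $2j+1$ has $a$ in column $j$ and $-b$ in column $j+1$, all other entries $0$. $D_1^{(k)}(\xi)$ is the $(k-1)\times(2k)$ matrix whose row $j$ ($j=0,\dots,k-2$) has $-a,-d,b,-c$ in columns $2j,2j+1,2j+2,2j+3$ and zeros elsewhere. $t$ denotes transpose; the matrices act on column vectors of polynomials. *)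

theory Defs
  imports "HOL-Computational_Algebra.Polynomial" "Jordan_Normal_Form.Matrix"
begin

text \<open>The polynomial ring C[xi0,xi1,xi2,xi3], represented as iterated univariate
  polynomials: xi3 is the outermost variable, xi0 the innermost.\<close>
type_synonym R4 = "complex poly poly poly poly"

definition cst :: "complex \<Rightarrow> R4" where
  "cst c = [:[:[:[:c:]:]:]:]"

definition xi0 :: R4 where "xi0 = [:[:[:[:0, 1:]:]:]:]"
definition xi1 :: R4 where "xi1 = [:[:[:0, 1:]:]:]"
definition xi2 :: R4 where "xi2 = [:[:0, 1:]:]"
definition xi3 :: R4 where "xi3 = [:0, 1:]"

definition pa :: R4 where "pa = cst (1 / \<i>) * (xi0 - cst \<i> * xi1)"
definition pc :: R4 where "pc = cst (1 / \<i>) * (xi0 + cst \<i> * xi1)"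
definition pb :: R4 where "pb = cst (1 / \<i>) * (xi2 - cst \<i> * xi3)"
definition pd :: R4 where "pd = cst (1 / \<i>) * (xi2 + cst \<i> * xi3)"

definition D0 :: "nat \<Rightarrow> R4 mat" where
  "D0 k = mat (2 * k) (k + 1) (\<lambda>(r, s).
     (let j = r div 2 in
      if even r then (if s = j then - pd else if s = j + 1 then - pc else 0)
      else (if s = j then pa else if s = j + 1 then - pb else 0)))"

definition D1 :: "nat \<Rightarrow> R4 mat" where
  "D1 k = mat (k - 1) (2 * k) (\<lambda>(j, s).
     if s = 2 * j then - pa else if s = 2 * j + 1 then - pd
     else if s = 2 * j + 2 then pb else if s = 2 * j + 3 then - pc else 0)"

end

theory Submission imports Defs begin

lemma pd_eq: "pd = [: - ([:[:[:\<i>:]:]:] * [:0,1:]), 1 :]"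
  unfolding pd_def cst_def xi2_def xi3_def
  by (simp add: one_pCons)

lemma pa_const: "pa = [: [:[:[:0, -\<i>:]:]:] - [:[:0,1:]:] :]"
  unfolding pa_def cst_def xi0_def xi1_def
  by (simp add: one_pCons)

lemma pb_eq: "pb = [: - ([:[:[:\<i>:]:]:] * [:0,1:]), -1 :]"
  unfolding pb_def cst_def xi2_def xi3_def
  by (simp add: one_pCons)

lemma pc_const: "pc = [: [:[:[:0, -\<i>:]:]:] + [:[:0,1:]:] :]"
  unfolding pc_def cst_def xi0_def xi1_def
  by (simp add: one_pCons)

lemma pa_nz: "pa \<noteq> 0"
  unfolding pa_const by (simp add: pCons_eq_iff) 

lemma key_nz: "pa * pc + pb * pd \<noteq> 0"
proof
  assume "pa * pc + pb * pd = 0"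
  hence "coeff (pa * pc + pb * pd) 2 = 0" by simp
  thus False unfolding pa_const pc_const pb_eq pd_eq
    by (simp add: numeral_2_eq_2)
qed

lemma F1:
  assumes "pd * x = pa * y"
  shows "\<exists>u. x = pa * u \<and> y = pd * u"
proof -
  define e :: "complex poly poly poly" where "e = [:[:[:\<i>:]:]:] * [:0,1:]"
  have d: "pd = [:-e, 1:]" using pd_eq e_def by simp
  have "poly pd e = 0" by (simp add: d)
  have "poly (pa * y) e = 0" using assms[symmetric] \<open>poly pd e = 0\<close> by simp
  moreover have "poly pa e \<noteq> 0" unfolding pa_const by (simp add: pCons_eq_iff)
  ultimately have "poly y e = 0" by simp
  then obtain u where u: "y = pd * u" unfolding poly_eq_0_iff_dvd d by (auto elim: dvdE)
  have "pd \<noteq> 0" by (simp add: d)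
  from assms have "pd * x = pd * (pa * u)" by (simp add: u ac_simps)
  hence "x = pa * u" using \<open>pd \<noteq> 0\<close> by simp
  thus ?thesis using u by blast
qed


lemma sum_split2: "(\<Sum>r\<in>{0..<2*k}. f r) = (\<Sum>j\<in>{0..<k}. f (2*j) + f (2*j+1))"
  for f :: "nat \<Rightarrow> 'a::comm_monoid_add"
  by (induction k) (simp_all add: add.assoc)

lemma D0t: assumes v: "v \<in> carrier_vec (2*k)" and s: "s \<le> k"
  shows "(transpose_mat (D0 k) *\<^sub>v v) $ s =
    (if s < k then - pd * v$(2*s) + pa * v$(2*s+1) else 0)
  + (if 0 < s then - pc * v$(2*s-2) - pb * v$(2*s-1) else 0)"
proof -
  have "(transpose_mat (D0 k) *\<^sub>v v) $ s = (\<Sum>r\<in>{0..<2*k}. D0 k $$ (r, s) * v $ r)"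
    using v s by (simp add: scalar_prod_def D0_def)
  also have "\<dots> = (\<Sum>j\<in>{0..<k}. (if s = j then - pd * v$(2*j) + pa * v$(2*j+1) else 0)
      + (if s = j + 1 then - pc * v$(2*j) - pb * v$(2*j+1) else 0))"
    unfolding sum_split2 using s
    by (intro sum.cong) (auto simp: D0_def)
  also have "\<dots> = (if s < k then - pd * v$(2*s) + pa * v$(2*s+1) else 0)
      + (\<Sum>j\<in>{0..<k}. (if s = j + 1 then - pc * v$(2*j) - pb * v$(2*j+1) else 0))"
    by (simp add: sum.distrib)
  also have "(\<Sum>j\<in>{0..<k}. (if s = j + 1 then - pc * v$(2*j) - pb * v$(2*j+1) else 0))
     = (if 0 < s then - pc * v$(2*s-2) - pb * v$(2*s-1) else 0)"
  proof (cases "0 < s")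
    case True
    then obtain t where t: "s = t + 1" by (metis Suc_eq_plus1 gr0_conv_Suc)
    have "(\<Sum>j\<in>{0..<k}. (if s = j + 1 then - pc * v$(2*j) - pb * v$(2*j+1) else 0))
       = (\<Sum>j\<in>{0..<k}. (if t = j then - pc * v$(2*j) - pb * v$(2*j+1) else 0))"
      using t by (intro sum.cong) auto
    also have "\<dots> = - pc * v$(2*t) - pb * v$(2*t+1)" using t s by simp
    finally show ?thesis using t True by (simp add: algebra_simps)
  qed simp
  finally show ?thesis .
qed

lemma D1t_even: assumes w: "w \<in> carrier_vec (k-1)" and j: "j < k"
  shows "(transpose_mat (D1 k) *\<^sub>v w) $ (2*j) =
    (if j < k - 1 then - pa * w$j else 0) + (if 0 < j then pb * w$(j-1) else 0)"
proof -
  have "(transpose_mat (D1 k) *\<^sub>v w) $ (2*j) = (\<Sum>i\<in>{0..<k-1}. D1 k $$ (i, 2*j) * w $ i)"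
    using w j by (simp add: scalar_prod_def D1_def)
  also have "\<dots> = (\<Sum>i\<in>{0..<k-1}. (if i = j then - pa * w$i else 0) + (if i + 1 = j then pb * w$i else 0))"
    using j by (intro sum.cong) (auto simp: D1_def)
  also have "\<dots> = (if j < k - 1 then - pa * w$j else 0) + (if 0 < j then pb * w$(j-1) else 0)"
  proof -
    have "(\<Sum>i\<in>{0..<k-1}. (if i + 1 = j then pb * w$i else 0)) = (if 0 < j then pb * w$(j-1) else 0)"
    proof (cases "0 < j")
      case True
      have "(\<Sum>i\<in>{0..<k-1}. (if i + 1 = j then pb * w$i else 0)) = (\<Sum>i\<in>{0..<k-1}. (if i = j - 1 then pb * w$i else 0))"
        using True by (intro sum.cong) auto
      thus ?thesis using True j by simp
    qed simp
    thus ?thesis by (simp add: sum.distrib)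
  qed
  finally show ?thesis .
qed

lemma D1t_odd: assumes w: "w \<in> carrier_vec (k-1)" and j: "j < k"
  shows "(transpose_mat (D1 k) *\<^sub>v w) $ (2*j+1) =
    (if j < k - 1 then - pd * w$j else 0) + (if 0 < j then - pc * w$(j-1) else 0)"
proof -
  have "(transpose_mat (D1 k) *\<^sub>v w) $ (2*j+1) = (\<Sum>i\<in>{0..<k-1}. D1 k $$ (i, 2*j+1) * w $ i)"
    using w j by (simp add: scalar_prod_def D1_def)
  also have "\<dots> = (\<Sum>i\<in>{0..<k-1}. (if i = j then - pd * w$i else 0) + (if i + 1 = j then - pc * w$i else 0))"
    using j by (intro sum.cong) (auto simp: D1_def)
  also have "\<dots> = (if j < k - 1 then - pd * w$j else 0) + (if 0 < j then - pc * w$(j-1) else 0)"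
  proof -
    have "(\<Sum>i\<in>{0..<k-1}. (if i + 1 = j then - pc * w$i else 0)) = (if 0 < j then - pc * w$(j-1) else 0)"
    proof (cases "0 < j")
      case True
      have "(\<Sum>i\<in>{0..<k-1}. (if i + 1 = j then - pc * w$i else 0)) = (\<Sum>i\<in>{0..<k-1}. (if i = j - 1 then - pc * w$i else 0))"
        using True by (intro sum.cong) auto
      thus ?thesis using True j by simp
    qed simp
    thus ?thesis by (simp add: sum.distrib)
  qed
  finally show ?thesis .
qed


lemma aux2: assumes "x = - pa * W1 + pb * W0" "y = - pd * W1 - pc * W0"
  shows "- pc * x - pb * y = (pa*pc+pb*pd) * W1"
proof -
  have "- pc * (- pa * W1 + pb * W0) - pb * (- pd * W1 - pc * W0) = (pa*pc+pb*pd) * W1"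
    by (simp add: algebra_simps)
  thus ?thesis using assms by simp
qed

lemma aux3: fixes a b c d X Y Wn :: "'a::comm_ring_1"
  assumes "- d * X + a * Y + (a*c+b*d) * Wn = 0"
  shows "d * (X - b * Wn) = a * (Y + c * Wn)"
proof -
  have "d * (X - b * Wn) - a * (Y + c * Wn) = - (- d * X + a * Y + (a*c+b*d) * Wn)"
    by (simp add: algebra_simps)
  also have "\<dots> = 0" unfolding assms by simp
  finally show ?thesis by simp
qed

definition WW :: "nat \<Rightarrow> R4 vec \<Rightarrow> nat \<Rightarrow> R4" where
  "WW k w i = (if 0 < i \<and> i < k then w $ (i - 1) else 0)"

lemma D1t_W: assumes w: "w \<in> carrier_vec (k-1)" and j: "j < k"
  shows "(transpose_mat (D1 k) *\<^sub>v w) $ (2*j) = - pa * WW k w (Suc j) + pb * WW k w j"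
    and "(transpose_mat (D1 k) *\<^sub>v w) $ (2*j+1) = - pd * WW k w (Suc j) - pc * WW k w j"
  using D1t_even[OF w j] D1t_odd[OF w j] j by (auto simp: WW_def)

lemma D0t_zero:
  assumes v: "v \<in> carrier_vec (2*k)" and W0: "W 0 = 0" and Wk: "W k = 0"
    and rep: "\<And>j. j < k \<Longrightarrow> v$(2*j) = - pa * W (Suc j) + pb * W j
                 \<and> v$(2*j+1) = - pd * W (Suc j) - pc * W j"
  shows "transpose_mat (D0 k) *\<^sub>v v = 0\<^sub>v (k+1)"
proof (rule eq_vecI)
  show "dim_vec (transpose_mat (D0 k) *\<^sub>v v) = dim_vec (0\<^sub>v (k + 1))" by (simp add: D0_def)
  fix s assume "s < dim_vec (0\<^sub>v (k + 1) :: R4 vec)"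
  hence s: "s \<le> k" by simp
  define K where "K = pa*pc+pb*pd"
  have t1: "(if s < k then - pd * v$(2*s) + pa * v$(2*s+1) else 0) = - K * W s"
  proof (cases "s < k")
    case True
    from rep[OF True] have "v$(2*s) = - pa * W (Suc s) + pb * W s" "v$(2*s+1) = - pd * W (Suc s) - pc * W s"
      by auto
    hence "(if s < k then - pd * v$(2*s) + pa * v$(2*s+1) else 0)
       = - pd * (- pa * W (Suc s) + pb * W s) + pa * (- pd * W (Suc s) - pc * W s)"
      using True by simp
    also have "\<dots> = - K * W s" unfolding K_def by (simp add: algebra_simps)
    finally show ?thesis .
  qed (use Wk s in simp)
  have t2: "(if 0 < s then - pc * v$(2*s-2) - pb * v$(2*s-1) else 0) = K * W s"
  proof (cases "0 < s")
    case True
    then obtain t where t: "s = Suc t" using gr0_conv_Suc by blast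
    have "2*s-2 = 2*t" "2*s-1 = 2*t+1" using t by auto
    hence "(if 0 < s then - pc * v$(2*s-2) - pb * v$(2*s-1) else 0) = - pc * v$(2*t) - pb * v$(2*t+1)"
      using True by simp
    also have "\<dots> = K * W s" unfolding K_def using rep[of t] t s by (intro aux2) auto
    finally show ?thesis .
  qed (simp add: W0)
  show "(transpose_mat (D0 k) *\<^sub>v v) $ s = 0\<^sub>v (k + 1) $ s"
    using D0t[OF v s] t1 t2 s by simp
qed

theorem proposition4p1:
  fixes k :: nat
  assumes "k \<ge> 2"
  shows "{v \<in> carrier_vec (2 * k). transpose_mat (D0 k) *\<^sub>v v = 0\<^sub>v (k + 1)}
       = {transpose_mat (D1 k) *\<^sub>v w | w. w \<in> carrier_vec (k - 1)}"
proof (intro equalityI subsetI)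
  fix v assume "v \<in> {v \<in> carrier_vec (2 * k). transpose_mat (D0 k) *\<^sub>v v = 0\<^sub>v (k + 1)}"
  hence v: "v \<in> carrier_vec (2*k)" and ker: "transpose_mat (D0 k) *\<^sub>v v = 0\<^sub>v (k + 1)" by auto
  have eq: "(if s < k then - pd * v$(2*s) + pa * v$(2*s+1) else 0)
  + (if 0 < s then - pc * v$(2*s-2) - pb * v$(2*s-1) else 0) = 0" if "s \<le> k" for s
  proof -
    have "(transpose_mat (D0 k) *\<^sub>v v) $ s = 0" using ker that by simp
    thus ?thesis using D0t[OF v that] by simp
  qed
  have second: "(if 0 < s then - pc * v$(2*s-2) - pb * v$(2*s-1) else 0) = (pa*pc+pb*pd) * W s"
    if "s \<le> k" "W 0 = 0" "\<forall>j<s. v$(2*j) = - pa * W (Suc j) + pb * W j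
                 \<and> v$(2*j+1) = - pd * W (Suc j) - pc * W j" for s W
  proof (cases "0 < s")
    case True
    then obtain t where t: "s = Suc t" using gr0_conv_Suc by blast
    have "2*s-2 = 2*t" "2*s-1 = 2*t+1" using t by auto
    hence "(if 0 < s then - pc * v$(2*s-2) - pb * v$(2*s-1) else 0) = - pc * v$(2*t) - pb * v$(2*t+1)"
      using True by simp
    also have "\<dots> = (pa*pc+pb*pd) * W s" using that(3) t by (intro aux2) auto
    finally show ?thesis .
  qed (simp add: that)
  have ex: "\<exists>W. W 0 = 0 \<and> (\<forall>j<n. v$(2*j) = - pa * W (Suc j) + pb * W j
                 \<and> v$(2*j+1) = - pd * W (Suc j) - pc * W j)" if "n \<le> k" for n
    using that
  proof (induction n)
    case 0 show ?case by auto
  next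
    case (Suc n)
    then obtain W where W0: "W 0 = 0" and rep: "\<forall>j<n. v$(2*j) = - pa * W (Suc j) + pb * W j
                 \<and> v$(2*j+1) = - pd * W (Suc j) - pc * W j" by auto
    have nk: "n < k" "n \<le> k" using Suc by auto
    have "- pd * v$(2*n) + pa * v$(2*n+1) + (pa*pc+pb*pd) * W n = 0"
      using eq[OF nk(2), unfolded second[OF nk(2) W0 rep] if_P[OF nk(1)]] .
    hence "pd * (v$(2*n) - pb * W n) = pa * (v$(2*n+1) + pc * W n)"
      by (rule aux3)
    then obtain u where u: "v$(2*n) - pb * W n = pa * u" "v$(2*n+1) + pc * W n = pd * u"
      using F1 by blast
    define W' where "W' = W(Suc n := - u)"
    have "W' 0 = 0" using W0 by (simp add: W'_def)
    moreover have "\<forall>j<Suc n. v$(2*j) = - pa * W' (Suc j) + pb * W' j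
                 \<and> v$(2*j+1) = - pd * W' (Suc j) - pc * W' j"
    proof (intro allI impI)
      fix j assume "j < Suc n"
      show "v$(2*j) = - pa * W' (Suc j) + pb * W' j \<and> v$(2*j+1) = - pd * W' (Suc j) - pc * W' j"
      proof (cases "j = n")
        case True
        have e1: "v$(2*n) = pa * u + pb * W n" using u(1) by (simp add: diff_eq_eq)
        have e2: "v$(2*n+1) = pd * u - pc * W n" using u(2) by (simp add: eq_diff_eq)
        have "W' (Suc n) = - u" "W' n = W n" by (simp_all add: W'_def)
        thus ?thesis using True e1 e2 by simp
      next
        case False
        hence "j < n" using \<open>j < Suc n\<close> by simp
        moreover have "W' (Suc j) = W (Suc j)" "W' j = W j" using \<open>j < n\<close> by (simp_all add: W'_def)
        ultimately show ?thesis using rep by simp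
      qed
    qed
    ultimately show ?case by blast
  qed
  obtain W where W0: "W 0 = 0" and rep: "\<forall>j<k. v$(2*j) = - pa * W (Suc j) + pb * W j
                 \<and> v$(2*j+1) = - pd * W (Suc j) - pc * W j" using ex[of k] by auto
  have e: "(if k < k then - pd * v$(2*k) + pa * v$(2*k+1) else 0) + (pa*pc+pb*pd) * W k = 0"
    using eq[OF le_refl, unfolded second[OF le_refl W0 rep]] .
  hence "(pa*pc+pb*pd) * W k = 0" by (simp only: less_irrefl if_False add_0_left)
  hence Wk: "W k = 0" using key_nz by simp
  define w where "w = vec (k-1) (\<lambda>i. W (Suc i))"
  have w: "w \<in> carrier_vec (k-1)" by (simp add: w_def)
  have WW: "WW k w i = W i" if "i \<le> k" for i
    using that W0 Wk assms by (auto simp: WW_def w_def)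
  have "v = transpose_mat (D1 k) *\<^sub>v w"
  proof (rule eq_vecI)
    show "dim_vec v = dim_vec (transpose_mat (D1 k) *\<^sub>v w)" using v by (simp add: D1_def)
    fix r assume "r < dim_vec (transpose_mat (D1 k) *\<^sub>v w)"
    hence r: "r < 2*k" by (simp add: D1_def)
    show "v $ r = (transpose_mat (D1 k) *\<^sub>v w) $ r"
    proof (cases "even r")
      case True
      then obtain j where j: "r = 2*j" by blast
      hence "j < k" using r by simp
      thus ?thesis using D1t_W(1)[OF w, of j] rep WW[of j] WW[of "Suc j"] j by simp
    next
      case False
      then obtain j where j: "r = 2*j+1" using oddE by blast
      hence "j < k" using r by simp
      thus ?thesis using D1t_W(2)[OF w, of j] rep WW[of j] WW[of "Suc j"] j by simp
    qed
  qed
  thus "v \<in> {transpose_mat (D1 k) *\<^sub>v w | w. w \<in> carrier_vec (k - 1)}" using w by blast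
next
  fix v assume "v \<in> {transpose_mat (D1 k) *\<^sub>v w | w. w \<in> carrier_vec (k - 1)}"
  then obtain w where w: "w \<in> carrier_vec (k-1)" and vw: "v = transpose_mat (D1 k) *\<^sub>v w" by auto
  have vc: "v \<in> carrier_vec (2*k)" unfolding vw by (rule carrier_vecI) (simp add: D1_def)
  have "transpose_mat (D0 k) *\<^sub>v v = 0\<^sub>v (k+1)"
  proof (rule D0t_zero[OF vc, of "WW k w"])
    show "WW k w 0 = 0" "WW k w k = 0" by (simp_all add: WW_def)
    fix j assume "j < k"
    thus "v$(2*j) = - pa * WW k w (Suc j) + pb * WW k w j
                 \<and> v$(2*j+1) = - pd * WW k w (Suc j) - pc * WW k w j"
      unfolding vw using D1t_W[OF w] by blast
  qed
  thus "v \<in> {v \<in> carrier_vec (2 * k). transpose_mat (D0 k) *\<^sub>v v = 0\<^sub>v (k + 1)}" using vc by blast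
qed

end
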